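(* Let $s\ge4$, $d=s-3$, $V=\mathbb{F}_2^s$, and let $\mathbf b_{12},\mathbf b_{13},\mathbf b_{23}\in\mathbb{F}_2^d$ (with $\mathbf b_{ji}:=\mathbf b_{ij}$, $\mathbf b_{ii}:=\mathbf 0$) be such that the symmetric zero-diagonal matrix $\Theta=(\mathbf b_{ij})_{1\le i,j\le3}$ has no nontrivial $\mathbb{F}_2$-linear combination of its columns equal to zero. Let $\circ$ be the operation on $V$ $$x\circ y=x+y+\Big(0,0,0,\sum_{1\le i<j\le3}(x_iy_j+x_jy_i)\mathbf b_{ij}\Big).$$ Let $\lambda\in\mathbb{F}_2^{s\times s}$ (acting on row vectors by $x\mapsto x\lambda$). Then $\lambda\in H_\circ$ if and only if $$\lambda=\begin{pmatrix}A&B\\ 0_{d,3}&D\end{pmatrix}$$ for some $A\in\mathrm{GL}(\mathbb{F}_2^3)$, $D\in\mathrm{GL}(\mathbb{F}_2^d)$ and $B\in\mathbb{F}_2^{3\times d}$ satisfying, for all $1\le i<j\le3$, the compatibility equations $$\mathbf b_{ij}D=\sum_{1\le k_1<k_2\le3}\big(A_{ik_1}A_{jk_2}+A_{ik_2}A_{jk_1}\big)\mathbf b_{k_1k_2},$$ where $A_{kl}$ denotes the $(k,l)$ entry of $A$.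
   Context: The operation $\circ$ is an alternative operation on $V$ (its translations $x\mapsto x\circ a$ form an elementary abelian regular group of xor-affine maps) with weak key space $\{k: x\circ k=x+k\ \forall x\}$ equal to the span of the last $d$ canonical vectors. $H_\circ$ is the group of maps $f\in\mathrm{GL}(V,+)$ with $(a\circ b)f=af\circ bf$ for all $a,b\in V$ (postfix notation). Vectors $\mathbf b_{ij}$ are row vectors, so $\mathbf b_{ij}D$ is a vector-matrix product. *)

theory Defs
  imports "HOL-Library.Z2" "Jordan_Normal_Form.Matrix"
begin

text \<open>Vectors of V = F_2^s are elements of carrier_vec s,
  coordinates are indexed 0..s-1 (paper's coordinate i is index i-1).
  Vectors b_12, b_13, b_23 in F_2^d are given as b01, b02, b12 (0-based).\<close>

definition row_mult :: "'a::semiring_0 vec \<Rightarrow> 'a mat \<Rightarrow> 'a vec" where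
  "row_mult x A = vec (dim_col A) (\<lambda>j. \<Sum>i<dim_vec x. x $ i * A $$ (i, j))"

definition bsym :: "'a::zero vec \<Rightarrow> 'a vec \<Rightarrow> 'a vec \<Rightarrow> nat \<Rightarrow> nat \<Rightarrow> 'a vec" where
  "bsym b01 b02 b12 i j =
     (if {i, j} = {0, 1} then b01
      else if {i, j} = {0, 2} then b02
      else if {i, j} = {1, 2} then b12
      else 0\<^sub>v (dim_vec b01))"

definition theta_nondeg :: "nat \<Rightarrow> bit vec \<Rightarrow> bit vec \<Rightarrow> bit vec \<Rightarrow> bool" where
  "theta_nondeg d b01 b02 b12 \<longleftrightarrow>
     (\<forall>c :: nat \<Rightarrow> bit.
        (\<forall>i<3. \<forall>l<d. (\<Sum>j<3. c j * (bsym b01 b02 b12 i j $ l)) = 0)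
        \<longrightarrow> (\<forall>j<3. c j = 0))"

definition pairs3 :: "(nat \<times> nat) set" where
  "pairs3 = {(i, j). i < j \<and> j < 3}"

definition circ_op :: "nat \<Rightarrow> bit vec \<Rightarrow> bit vec \<Rightarrow> bit vec \<Rightarrow> bit vec \<Rightarrow> bit vec \<Rightarrow> bit vec" where
  "circ_op s b01 b02 b12 x y =
     x + y + vec s (\<lambda>k. if k < 3 then 0
        else (\<Sum>(i, j)\<in>pairs3. (x $ i * y $ j + x $ j * y $ i) * (bsym b01 b02 b12 i j $ (k - 3))))"

definition in_H_circ :: "nat \<Rightarrow> (bit vec \<Rightarrow> bit vec \<Rightarrow> bit vec) \<Rightarrow> bit mat \<Rightarrow> bool" where
  "in_H_circ s circ L \<longleftrightarrow>
     L \<in> carrier_mat s s \<and>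
     bij_betw (\<lambda>x. row_mult x L) (carrier_vec s) (carrier_vec s) \<and>
     (\<forall>a\<in>carrier_vec s. \<forall>b\<in>carrier_vec s.
        row_mult (circ a b) L = circ (row_mult a L) (row_mult b L))"

end

theory Submission imports Defs "Jordan_Normal_Form.Determinant" begin

declare add_bit_eq_xor[simp del] mult_bit_eq_and[simp del]

lemma polyid: fixes a0 a1 a2 b0 b1 b2 A00 A01 A02 A10 A11 A12 A20 A21 A22 x01 x02 x12 :: "'a::comm_ring_1"
 shows "((a0*A00+a1*A10+a2*A20)*(b0*A01+b1*A11+b2*A21) + (a0*A01+a1*A11+a2*A21)*(b0*A00+b1*A10+b2*A20))*x01
 + ((a0*A00+a1*A10+a2*A20)*(b0*A02+b1*A12+b2*A22) + (a0*A02+a1*A12+a2*A22)*(b0*A00+b1*A10+b2*A20))*x02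
 + ((a0*A01+a1*A11+a2*A21)*(b0*A02+b1*A12+b2*A22) + (a0*A02+a1*A12+a2*A22)*(b0*A01+b1*A11+b2*A21))*x12 = 
  (a0*b1+a1*b0)*((A00*A11+A01*A10)*x01 + (A00*A12+A02*A10)*x02 + (A01*A12+A02*A11)*x12)
 +(a0*b2+a2*b0)*((A00*A21+A01*A20)*x01 + (A00*A22+A02*A20)*x02 + (A01*A22+A02*A21)*x12)
 +(a1*b2+a2*b1)*((A10*A21+A11*A20)*x01 + (A10*A22+A12*A20)*x02 + (A11*A22+A12*A21)*x12)
 + 2 * (a0*b0*(A00*A01*x01 + A00*A02*x02+A01*A02*x12) + a1*b1*(A10*A11*x01 + A10*A12*x02+A11*A12*x12)
   + a2*b2*(A20*A21*x01 + A20*A22*x02+A21*A22*x12))"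
  by (simp add: algebra_simps)

lemma pairs3_eq: "pairs3 = {(0,1),(0,2),(1,2)}"
  unfolding pairs3_def by (auto simp: less_Suc_eq numeral_3_eq_3)

lemma sum_pairs3: "(\<Sum>(i,j)\<in>pairs3. f i j) = f 0 1 + f 0 2 + f (1::nat) (2::nat)"
  by (simp add: pairs3_eq add.assoc)

lemma sum3: "(\<Sum>i<3. f i) = f (0::nat) + f 1 + (f 2 :: 'a::comm_monoid_add)"
  by (simp add: eval_nat_numeral ac_simps)

lemma bsym_vals:
  "bsym b01 b02 b12 0 1 = b01" "bsym b01 b02 b12 1 0 = b01"
  "bsym b01 b02 b12 0 2 = b02" "bsym b01 b02 b12 2 0 = b02"
  "bsym b01 b02 b12 1 2 = b12" "bsym b01 b02 b12 2 1 = b12"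
  "bsym b01 b02 b12 i i = 0\<^sub>v (dim_vec b01)"
  "bsym b01 b02 b12 0 (Suc 0) = b01" "bsym b01 b02 b12 (Suc 0) 0 = b01"
  "bsym b01 b02 b12 (Suc 0) 2 = b12" "bsym b01 b02 b12 2 (Suc 0) = b12"
  unfolding bsym_def by (auto simp: doubleton_eq_iff)

lemma row_mult_idx: "j < dim_col A \<Longrightarrow> row_mult x A $ j = (\<Sum>i<dim_vec x. x $ i * A $$ (i, j))"
  and row_mult_dim[simp]: "dim_vec (row_mult x A) = dim_col A"
  unfolding row_mult_def by auto

lemma sum_split3: "(s::nat) \<ge> 3 \<Longrightarrow> (\<Sum>i<s. g i) = (\<Sum>i<3. g i) + (\<Sum>m<s-3. g (m+3))"
proof -
  assume "s \<ge> 3"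
  have u: "{..<s} = {..<3} \<union> {3..<s}" using \<open>s \<ge> 3\<close> by auto
  have "(\<Sum>m<s-3. g (m+3)) = sum g {3..<s}"
    using sum.shift_bounds_nat_ivl[of g 0 3 "s-3"] \<open>s \<ge> 3\<close> by (simp add: lessThan_atLeast0)
  then show ?thesis unfolding u by (subst sum.union_disjoint) auto
qed

definition betaf :: "bit vec \<Rightarrow> bit vec \<Rightarrow> bit vec \<Rightarrow> (nat \<Rightarrow> bit) \<Rightarrow> (nat \<Rightarrow> bit) \<Rightarrow> nat \<Rightarrow> bit" where
 "betaf b01 b02 b12 x y m = (\<Sum>(i,j)\<in>pairs3. (x i * y j + x j * y i) * (bsym b01 b02 b12 i j $ m))"

lemma betaf_cong: "(\<And>p. p < 3 \<Longrightarrow> x p = x' p) \<Longrightarrow> (\<And>p. p < 3 \<Longrightarrow> y p = y' p) \<Longrightarrow>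
   betaf b01 b02 b12 x y m = betaf b01 b02 b12 x' y' m"
  unfolding betaf_def sum_pairs3 by simp

lemma betaf_expand: "betaf b01 b02 b12 x y m = (x 0 * y 1 + x 1 * y 0) * b01 $ m + (x 0 * y 2 + x 2 * y 0) * b02 $ m
   + (x 1 * y 2 + x 2 * y 1) * b12 $ m"
  unfolding betaf_def sum_pairs3 bsym_vals by simp

lemma circ_idx: "a \<in> carrier_vec s \<Longrightarrow> b \<in> carrier_vec s \<Longrightarrow> k < s \<Longrightarrow>
  circ_op s b01 b02 b12 a b $ k = a $ k + b $ k + (if k < 3 then 0 else betaf b01 b02 b12 (($) a) (($) b) (k - 3))"
  unfolding circ_op_def betaf_def by simp

lemma circ_dim: "a \<in> carrier_vec s \<Longrightarrow> b \<in> carrier_vec s \<Longrightarrow> circ_op s b01 b02 b12 a b \<in> carrier_vec s"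
  unfolding circ_op_def by simp

lemma row_mult_carrier: "L \<in> carrier_mat s s \<Longrightarrow> row_mult x L \<in> carrier_vec s"
  by (metis carrier_matD(2) carrier_vecI row_mult_dim)

lemma row_mult_unit: "(L::bit mat) \<in> carrier_mat s s \<Longrightarrow> i < s \<Longrightarrow> p < s \<Longrightarrow> row_mult (unit_vec s i) L $ p = L $$ (i, p)"
proof -
  have e: "\<And>P x. (if P then 1 else 0) * (x::bit) = (if P then x else 0)" by simp
  assume "L \<in> carrier_mat s s" "i < s" "p < s"
  then show ?thesis by (simp add: row_mult_idx unit_vec_def e sum.delta)
qed

lemma row_mult_transpose: "(L::bit mat) \<in> carrier_mat s s \<Longrightarrow> x \<in> carrier_vec s \<Longrightarrow> row_mult x L = transpose_mat L *\<^sub>v x"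
  apply (rule eq_vecI)
  by (auto simp: row_mult_idx scalar_prod_def lessThan_atLeast0 intro!: sum.cong)

lemma key:
  fixes a b :: "nat \<Rightarrow> bit" and A :: "nat \<Rightarrow> nat \<Rightarrow> bit"
  shows "(a 0 * b 1 + a 1 * b 0) * (\<Sum>(k1, k2)\<in>pairs3. (A 0 k1 * A 1 k2 + A 0 k2 * A 1 k1) * (bsym b01 b02 b12 k1 k2 $ l))
    + (a 0 * b 2 + a 2 * b 0) * (\<Sum>(k1, k2)\<in>pairs3. (A 0 k1 * A 2 k2 + A 0 k2 * A 2 k1) * (bsym b01 b02 b12 k1 k2 $ l))
    + (a 1 * b 2 + a 2 * b 1) * (\<Sum>(k1, k2)\<in>pairs3. (A 1 k1 * A 2 k2 + A 1 k2 * A 2 k1) * (bsym b01 b02 b12 k1 k2 $ l))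
    = betaf b01 b02 b12 (\<lambda>p. \<Sum>i<3. a i * A i p) (\<lambda>p. \<Sum>i<3. b i * A i p) l"
proof -
  note P = polyid[of "a 0" "A 0 0" "a 1" "A 1 0" "a 2" "A 2 0"
     "b 0" "A 0 1" "b 1" "A 1 1" "b 2" "A 2 1" "b01 $ l"
     "A 0 2" "A 1 2" "A 2 2" "b02 $ l" "b12 $ l"]
  show ?thesis
    unfolding sum_pairs3 sum3 betaf_expand bsym_vals P[unfolded bit_2_eq_0 mult_zero_left add_0_right]
    by (rule refl)
qed

lemma hom_iff:
  assumes s: "s \<ge> 3" and L: "(L::bit mat) \<in> carrier_mat s s" and a: "a \<in> carrier_vec s" and b: "b \<in> carrier_vec s"
  shows "row_mult (circ_op s b01 b02 b12 a b) L = circ_op s b01 b02 b12 (row_mult a L) (row_mult b L) \<longleftrightarrow>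
   (\<forall>k<s. (\<Sum>m<s-3. betaf b01 b02 b12 (($) a) (($) b) m * L$$(m+3,k)) =
      (if k<3 then 0 else betaf b01 b02 b12 (($) (row_mult a L)) (($) (row_mult b L)) (k-3)))"
proof -
  have comp: "row_mult (circ_op s b01 b02 b12 a b) L $ k = row_mult a L $ k + row_mult b L $ k
     + (\<Sum>m<s-3. betaf b01 b02 b12 (($) a) (($) b) m * L$$(m+3,k))" if k: "k < s" for k
  proof -
    have "row_mult (circ_op s b01 b02 b12 a b) L $ k =
       (\<Sum>i<s. (a $ i + b $ i + (if i < 3 then 0 else betaf b01 b02 b12 (($) a) (($) b) (i - 3))) * L $$ (i, k))"
      using k L a b by (auto simp: row_mult_idx circ_idx circ_dim intro!: sum.cong)
    also have "\<dots> = (\<Sum>i<s. a $ i * L $$ (i, k)) + (\<Sum>i<s. b $ i * L $$ (i, k)) +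
       (\<Sum>i<s. (if i < 3 then 0 else betaf b01 b02 b12 (($) a) (($) b) (i - 3)) * L $$ (i, k))"
      by (simp add: distrib_right sum.distrib)
    also have "(\<Sum>i<s. (if i < 3 then 0 else betaf b01 b02 b12 (($) a) (($) b) (i - 3)) * L $$ (i, k))
       = (\<Sum>m<s-3. betaf b01 b02 b12 (($) a) (($) b) m * L$$(m+3,k))"
      using sum_split3[OF s, of "\<lambda>i. (if i < 3 then 0 else betaf b01 b02 b12 (($) a) (($) b) (i - 3)) * L $$ (i, k)"]
      by simp
    finally show ?thesis using k L a b by (simp add: row_mult_idx)
  qed
  have comp2: "circ_op s b01 b02 b12 (row_mult a L) (row_mult b L) $ k = row_mult a L $ k + row_mult b L $ k
     + (if k<3 then 0 else betaf b01 b02 b12 (($) (row_mult a L)) (($) (row_mult b L)) (k-3))" if k: "k < s" for k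
    using circ_idx[OF row_mult_carrier[OF L] row_mult_carrier[OF L] k] .
  have dims: "dim_vec (row_mult (circ_op s b01 b02 b12 a b) L) = s"
     "dim_vec (circ_op s b01 b02 b12 (row_mult a L) (row_mult b L)) = s"
    using L circ_dim[OF row_mult_carrier[OF L] row_mult_carrier[OF L]] by auto
  show ?thesis unfolding vec_eq_iff dims using comp comp2 by (simp add: add.assoc)
qed

lemma bsym_carrier: "b01 \<in> carrier_vec d \<Longrightarrow> b02 \<in> carrier_vec d \<Longrightarrow> b12 \<in> carrier_vec d \<Longrightarrow>
  bsym b01 b02 b12 i j \<in> carrier_vec d"
  unfolding bsym_def by auto

lemma beta_unit_right: "i < 3 \<Longrightarrow> 3 \<le> s \<Longrightarrow> l < dim_vec b01 \<Longrightarrow>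
  betaf b01 b02 b12 x (($) (unit_vec s i)) l = (\<Sum>j<3. x j * (bsym b01 b02 b12 i j $ l))"
proof -
  assume "i < 3" "3 \<le> s" "l < dim_vec b01"
  moreover have "i = 0 \<or> i = 1 \<or> i = 2" using \<open>i < 3\<close> by arith
  ultimately show ?thesis by (auto simp: betaf_expand sum3 bsym_vals)
qed

lemma beta_unit_left_zero: "3 \<le> k \<Longrightarrow> k < s \<Longrightarrow> betaf b01 b02 b12 (($) (unit_vec s k)) y l = 0"
  by (simp add: betaf_expand)

lemma beta_units: "(i,j) \<in> pairs3 \<Longrightarrow> 3 \<le> s \<Longrightarrow>
  betaf b01 b02 b12 (($) (unit_vec s i)) (($) (unit_vec s j)) l = bsym b01 b02 b12 i j $ l"
  unfolding pairs3_eq by (auto simp: betaf_expand bsym_vals)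

lemma det_ne0_inv: assumes "A \<in> carrier_mat n n" "det A \<noteq> (0::bit)" shows "invertible_mat A"
proof -
  from det_non_zero_imp_unit[OF assms, of undefined]
  obtain B where B: "B \<in> carrier_mat n n" "B * A = 1\<^sub>m n" "A * B = 1\<^sub>m n"
    unfolding Units_def ring_mat_def by auto
  then show ?thesis using assms(1) unfolding invertible_mat_def inverts_mat_def by auto
qed

lemma inv_det_ne0: assumes "A \<in> carrier_mat n n" "invertible_mat (A::bit mat)" shows "det A \<noteq> 0"
proof -
  from assms(2) obtain B where AB: "A * B = 1\<^sub>m (dim_row A)" and BA: "B * A = 1\<^sub>m (dim_row B)"
    unfolding invertible_mat_def inverts_mat_def by auto
  have "dim_col B = n" using arg_cong[OF AB, of dim_col] assms(1) by auto
  moreover have "dim_row B = n" using arg_cong[OF BA, of dim_col] assms(1) by auto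
  ultimately have Bc: "B \<in> carrier_mat n n" by auto
  have "det A * det B = 1" using det_mult[OF assms(1) Bc] AB assms(1) by simp
  then show ?thesis by (metis mult_zero_left zero_neq_one)
qed

theorem theorem6:
  fixes s :: nat and b01 b02 b12 :: "bit vec" and L :: "bit mat"
  assumes "s \<ge> 4"
    and "b01 \<in> carrier_vec (s - 3)" and "b02 \<in> carrier_vec (s - 3)" and "b12 \<in> carrier_vec (s - 3)"
    and "theta_nondeg (s - 3) b01 b02 b12"
    and "L \<in> carrier_mat s s"
  shows "in_H_circ s (circ_op s b01 b02 b12) L \<longleftrightarrow>
    (\<exists>A B D. A \<in> carrier_mat 3 3 \<and> invertible_mat A \<and>
       D \<in> carrier_mat (s - 3) (s - 3) \<and> invertible_mat D \<and>
       B \<in> carrier_mat 3 (s - 3) \<and>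
       L = four_block_mat A B (0\<^sub>m (s - 3) 3) D \<and>
       (\<forall>(i, j)\<in>pairs3.
          row_mult (bsym b01 b02 b12 i j) D =
          vec (s - 3) (\<lambda>l. \<Sum>(k1, k2)\<in>pairs3.
             (A $$ (i, k1) * A $$ (j, k2) + A $$ (i, k2) * A $$ (j, k1)) *
             (bsym b01 b02 b12 k1 k2 $ l))))"
proof -
  note s4 = assms(1) and b01 = assms(2) and b02 = assms(3) and b12 = assms(4)
    and nd = assms(5) and L = assms(6)
  have s3: "s \<ge> 3" using s4 by simp
  define d where "d = s - 3"
  have sd: "s = 3 + d" using s3 unfolding d_def by simp
  have db01: "dim_vec b01 = d" using b01 unfolding d_def by simp
  have bsc: "\<And>i j. bsym b01 b02 b12 i j \<in> carrier_vec d"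
    using bsym_carrier[OF b01 b02 b12] unfolding d_def .
  show ?thesis
  proof
    assume H: "in_H_circ s (circ_op s b01 b02 b12) L"
    then have bij: "bij_betw (\<lambda>x. row_mult x L) (carrier_vec s) (carrier_vec s)"
      and hom: "\<And>a b. a \<in> carrier_vec s \<Longrightarrow> b \<in> carrier_vec s \<Longrightarrow>
        row_mult (circ_op s b01 b02 b12 a b) L = circ_op s b01 b02 b12 (row_mult a L) (row_mult b L)"
      unfolding in_H_circ_def by auto
    have hom': "(\<Sum>m<s-3. betaf b01 b02 b12 (($) a) (($) b) m * L$$(m+3,k)) =
      (if k<3 then 0 else betaf b01 b02 b12 (($) (row_mult a L)) (($) (row_mult b L)) (k-3))"
      if "a \<in> carrier_vec s" "b \<in> carrier_vec s" "k < s" for a b k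
      using hom[OF that(1,2)] hom_iff[OF s3 L that(1,2)] that(3) by blast
    have surj: "\<exists>b\<in>carrier_vec s. row_mult b L = y" if "y \<in> carrier_vec s" for y
    proof -
      have "y \<in> (\<lambda>x. row_mult x L) ` carrier_vec s" using bij that unfolding bij_betw_def by simp
      then show ?thesis by auto
    qed
    have inj: "inj_on (\<lambda>x. row_mult x L) (carrier_vec s)" using bij unfolding bij_betw_def by auto
    have zero: "L $$ (k, j) = 0" if k: "3 \<le> k" "k < s" and j: "j < 3" for k j
    proof -
      let ?u = "row_mult (unit_vec s k) L"
      have uv: "\<And>p. p < 3 \<Longrightarrow> ?u $ p = L $$ (k, p)" using row_mult_unit[OF L] k s3 by auto
      have A0: "betaf b01 b02 b12 (($) ?u) (($) (row_mult b L)) l = 0"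
        if b: "b \<in> carrier_vec s" and l: "l < d" for b l
      proof -
        have "l + 3 < s" using l sd by simp
        from hom'[of "unit_vec s k" b "l+3"] b this show ?thesis
          using beta_unit_left_zero[OF k] by simp
      qed
      have "\<forall>i<3. \<forall>l<d. (\<Sum>j<3. L $$ (k, j) * (bsym b01 b02 b12 i j $ l)) = 0"
      proof (intro allI impI)
        fix i l :: nat assume i: "i < 3" and l: "l < d"
        have "unit_vec s i \<in> carrier_vec s" by simp
        from surj[OF this] obtain b where b: "b \<in> carrier_vec s" "row_mult b L = unit_vec s i" by auto
        have "0 = betaf b01 b02 b12 (($) ?u) (($) (unit_vec s i)) l" using A0[OF b(1) l] b(2) by simp
        also have "\<dots> = (\<Sum>j<3. ?u $ j * (bsym b01 b02 b12 i j $ l))"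
          using beta_unit_right[OF i s3] l db01 by simp
        also have "\<dots> = (\<Sum>j<3. L $$ (k, j) * (bsym b01 b02 b12 i j $ l))"
          using uv by simp
        finally show "(\<Sum>j<3. L $$ (k, j) * (bsym b01 b02 b12 i j $ l)) = 0" by simp
      qed
      moreover have T: "\<And>c. (\<forall>i<3. \<forall>l<d. (\<Sum>j<3. c j * (bsym b01 b02 b12 i j $ l)) = 0) \<Longrightarrow> \<forall>j<3. c j = 0"
        using nd unfolding theta_nondeg_def d_def by blast
      ultimately show ?thesis using T[of "\<lambda>j. L $$ (k, j)"] j by simp
    qed
    define A where "A = mat 3 3 (\<lambda>(i,j). L $$ (i,j))"
    define B where "B = mat 3 d (\<lambda>(i,j). L $$ (i,j+3))"
    define D where "D = mat d d (\<lambda>(i,j). L $$ (i+3,j+3))"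
    have Ac: "A \<in> carrier_mat 3 3" and Bc: "B \<in> carrier_mat 3 d" and Dc: "D \<in> carrier_mat d d"
      unfolding A_def B_def D_def by auto
    have Lblock: "L = four_block_mat A B (0\<^sub>m d 3) D"
    proof (rule eq_matI)
      fix i j assume "i < dim_row (four_block_mat A B (0\<^sub>m d 3) D)" "j < dim_col (four_block_mat A B (0\<^sub>m d 3) D)"
      then have i: "i < 3 + d" and j: "j < 3 + d" using Ac Dc by auto
      show "L $$ (i, j) = four_block_mat A B (0\<^sub>m d 3) D $$ (i, j)"
        using i j Ac Dc zero[of i j] sd unfolding A_def B_def D_def by auto
    qed (use L Ac Dc sd in auto)
    have detL: "det L = det A * det D"
      using det_four_block_mat_lower_left_zero[OF Ac Bc refl Dc] Lblock by simp
    have "det L \<noteq> 0"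
    proof
      assume "det L = 0"
      then have "det (transpose_mat L) = 0" using det_transpose[OF L] by simp
      then obtain v where v: "v \<in> carrier_vec s" "v \<noteq> 0\<^sub>v s" "transpose_mat L *\<^sub>v v = 0\<^sub>v s"
        using det_0_iff_vec_prod_zero[of "transpose_mat L" s] L by auto
      have z: "row_mult (0\<^sub>v s) L = 0\<^sub>v s"
        by (rule eq_vecI) (use L in \<open>auto simp: row_mult_idx\<close>)
      have "row_mult v L = row_mult (0\<^sub>v s) L" using v z row_mult_transpose[OF L v(1)] by simp
      then have "v = 0\<^sub>v s" using inj v(1) unfolding inj_on_def by auto
      with v(2) show False by simp
    qed
    then have dA: "det A \<noteq> 0" and dD: "det D \<noteq> 0" using detL by auto
    have compat: "row_mult (bsym b01 b02 b12 i j) D =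
          vec d (\<lambda>l. \<Sum>(k1, k2)\<in>pairs3.
             (A $$ (i, k1) * A $$ (j, k2) + A $$ (i, k2) * A $$ (j, k1)) *
             (bsym b01 b02 b12 k1 k2 $ l))" if ij: "(i,j) \<in> pairs3" for i j
    proof (rule eq_vecI)
      have i3: "i < 3" and j3: "j < 3" using ij unfolding pairs3_def by auto
      fix l assume "l < dim_vec (vec d (\<lambda>l. \<Sum>(k1, k2)\<in>pairs3.
             (A $$ (i, k1) * A $$ (j, k2) + A $$ (i, k2) * A $$ (j, k1)) *
             (bsym b01 b02 b12 k1 k2 $ l)))"
      then have l: "l < d" by simp
      have ls: "l + 3 < s" using l sd by simp
      have ei: "unit_vec s i \<in> carrier_vec s" and ej: "unit_vec s j \<in> carrier_vec s" by auto
      have "row_mult (bsym b01 b02 b12 i j) D $ l = (\<Sum>m<d. bsym b01 b02 b12 i j $ m * D $$ (m, l))"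
        using bsc[of i j] Dc l by (simp add: row_mult_idx)
      also have "\<dots> = (\<Sum>m<s-3. betaf b01 b02 b12 (($) (unit_vec s i)) (($) (unit_vec s j)) m * L$$(m+3,l+3))"
        unfolding d_def using beta_units[OF ij s3] l unfolding D_def d_def by (auto intro!: sum.cong)
      also have "\<dots> = betaf b01 b02 b12 (($) (row_mult (unit_vec s i) L)) (($) (row_mult (unit_vec s j) L)) l"
        using hom'[OF ei ej ls] by simp
      also have "\<dots> = betaf b01 b02 b12 (\<lambda>p. A $$ (i, p)) (\<lambda>p. A $$ (j, p)) l"
        by (rule betaf_cong) (use i3 j3 s3 L in \<open>auto simp: row_mult_unit A_def\<close>)
      also have "\<dots> = vec d (\<lambda>l. \<Sum>(k1, k2)\<in>pairs3.
             (A $$ (i, k1) * A $$ (j, k2) + A $$ (i, k2) * A $$ (j, k1)) *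
             (bsym b01 b02 b12 k1 k2 $ l)) $ l"
        using l unfolding betaf_def by simp
      finally show "row_mult (bsym b01 b02 b12 i j) D $ l = vec d (\<lambda>l. \<Sum>(k1, k2)\<in>pairs3.
             (A $$ (i, k1) * A $$ (j, k2) + A $$ (i, k2) * A $$ (j, k1)) *
             (bsym b01 b02 b12 k1 k2 $ l)) $ l" .
    qed (use Dc in simp)
    show "\<exists>A B D. A \<in> carrier_mat 3 3 \<and> invertible_mat A \<and>
       D \<in> carrier_mat (s - 3) (s - 3) \<and> invertible_mat D \<and>
       B \<in> carrier_mat 3 (s - 3) \<and>
       L = four_block_mat A B (0\<^sub>m (s - 3) 3) D \<and>
       (\<forall>(i, j)\<in>pairs3.
          row_mult (bsym b01 b02 b12 i j) D =
          vec (s - 3) (\<lambda>l. \<Sum>(k1, k2)\<in>pairs3.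
             (A $$ (i, k1) * A $$ (j, k2) + A $$ (i, k2) * A $$ (j, k1)) *
             (bsym b01 b02 b12 k1 k2 $ l)))"
      apply (rule exI[of _ A], rule exI[of _ B], rule exI[of _ D])
      using Ac Bc Dc det_ne0_inv[OF Ac dA] det_ne0_inv[OF Dc dD] Lblock compat
      unfolding d_def by auto
  next
    assume "\<exists>A B D. A \<in> carrier_mat 3 3 \<and> invertible_mat A \<and>
       D \<in> carrier_mat (s - 3) (s - 3) \<and> invertible_mat D \<and>
       B \<in> carrier_mat 3 (s - 3) \<and>
       L = four_block_mat A B (0\<^sub>m (s - 3) 3) D \<and>
       (\<forall>(i, j)\<in>pairs3.
          row_mult (bsym b01 b02 b12 i j) D =
          vec (s - 3) (\<lambda>l. \<Sum>(k1, k2)\<in>pairs3.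
             (A $$ (i, k1) * A $$ (j, k2) + A $$ (i, k2) * A $$ (j, k1)) *
             (bsym b01 b02 b12 k1 k2 $ l)))"
    then obtain A B D where Ac: "A \<in> carrier_mat 3 3" and iA: "invertible_mat A"
      and Dc: "D \<in> carrier_mat d d" and iD: "invertible_mat D" and Bc: "B \<in> carrier_mat 3 d"
      and Lblock: "L = four_block_mat A B (0\<^sub>m d 3) D"
      and compat: "\<And>i j. (i,j) \<in> pairs3 \<Longrightarrow> row_mult (bsym b01 b02 b12 i j) D =
          vec d (\<lambda>l. \<Sum>(k1, k2)\<in>pairs3.
             (A $$ (i, k1) * A $$ (j, k2) + A $$ (i, k2) * A $$ (j, k1)) *
             (bsym b01 b02 b12 k1 k2 $ l))"
      unfolding d_def by blast
    have Lidx: "L $$ (i, k) = (if i < 3 then if k < 3 then A $$ (i,k) else B $$ (i, k - 3)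
       else if k < 3 then 0 else D $$ (i - 3, k - 3))" if "i < s" "k < s" for i k
      using that Ac Dc sd unfolding Lblock by auto
    have detL: "det L = det A * det D"
      using det_four_block_mat_lower_left_zero[OF Ac Bc refl Dc] Lblock by simp
    have "det L \<noteq> 0" using detL inv_det_ne0[OF Ac iA] inv_det_ne0[OF Dc iD] by simp
    then have "det (transpose_mat L) \<noteq> 0" using det_transpose[OF L] by simp
    from det_non_zero_imp_unit[OF _ this, of s undefined] L
    obtain M where M: "M \<in> carrier_mat s s" "M * transpose_mat L = 1\<^sub>m s" "transpose_mat L * M = 1\<^sub>m s"
      unfolding Units_def ring_mat_def by auto
    have LT: "transpose_mat L \<in> carrier_mat s s" using L by simp
    have bij: "bij_betw (\<lambda>x. row_mult x L) (carrier_vec s) (carrier_vec s)"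
    proof (rule bij_betwI')
      fix x y :: "bit vec" assume x: "x \<in> carrier_vec s" and y: "y \<in> carrier_vec s"
      show "(row_mult x L = row_mult y L) = (x = y)"
      proof
        assume "row_mult x L = row_mult y L"
        then have "M *\<^sub>v (transpose_mat L *\<^sub>v x) = M *\<^sub>v (transpose_mat L *\<^sub>v y)"
          using row_mult_transpose[OF L x] row_mult_transpose[OF L y] by simp
        then show "x = y" using assoc_mult_mat_vec[OF M(1) LT x] assoc_mult_mat_vec[OF M(1) LT y] M(2) x y
          by simp
      qed simp
    next
      fix x :: "bit vec" assume "x \<in> carrier_vec s" then show "row_mult x L \<in> carrier_vec s" using row_mult_carrier[OF L] by auto
    next
      fix y :: "bit vec" assume y: "y \<in> carrier_vec s"
      have My: "M *\<^sub>v y \<in> carrier_vec s" using M(1) y by simp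
      have "row_mult (M *\<^sub>v y) L = y"
        using row_mult_transpose[OF L My] assoc_mult_mat_vec[OF LT M(1) y] M(3) y by simp
      then show "\<exists>x\<in>carrier_vec s. y = row_mult x L" using My by metis
    qed
    have hom: "row_mult (circ_op s b01 b02 b12 a b) L = circ_op s b01 b02 b12 (row_mult a L) (row_mult b L)"
      if a: "a \<in> carrier_vec s" and b: "b \<in> carrier_vec s" for a b
      unfolding hom_iff[OF s3 L a b]
    proof (intro allI impI)
      fix k assume k: "k < s"
      show "(\<Sum>m<s-3. betaf b01 b02 b12 (($) a) (($) b) m * L$$(m+3,k)) =
      (if k<3 then 0 else betaf b01 b02 b12 (($) (row_mult a L)) (($) (row_mult b L)) (k-3))"
      proof (cases "k < 3")
        case True
        then show ?thesis using Lidx k sd by (auto simp: d_def[symmetric] intro!: sum.neutral)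
      next
        case False
        define l where "l = k - 3"
        have l: "l < d" and kl: "k = l + 3" using False k sd unfolding l_def by auto
        have rowA: "row_mult x L $ p = (\<Sum>i<3. x $ i * A $$ (i, p))" if x: "x \<in> carrier_vec s" and p: "p < 3" for x p
        proof -
          have "row_mult x L $ p = (\<Sum>i<s. x $ i * L $$ (i, p))" using x p L s3 by (simp add: row_mult_idx)
          also have "\<dots> = (\<Sum>i<3. x $ i * L $$ (i, p)) + (\<Sum>m<s-3. x $ (m+3) * L $$ (m+3, p))"
            by (rule sum_split3[OF s3])
          also have "\<dots> = (\<Sum>i<3. x $ i * A $$ (i, p))"
            using Lidx p s3 by (simp add: less_diff_conv)
          finally show ?thesis .
        qed
        have R: "betaf b01 b02 b12 (($) (row_mult a L)) (($) (row_mult b L)) l =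
           betaf b01 b02 b12 (\<lambda>p. \<Sum>i<3. a $ i * A $$ (i, p)) (\<lambda>p. \<Sum>i<3. b $ i * A $$ (i, p)) l"
          by (rule betaf_cong) (use rowA a b in auto)
        have rm: "row_mult v D $ l = (\<Sum>m<d. v $ m * D $$ (m, l))" if "v \<in> carrier_vec d" for v
          using that Dc l by (simp add: row_mult_idx)
        have C: "(\<Sum>m<d. v $ m * D $$ (m, l)) = (\<Sum>(k1, k2)\<in>pairs3.
             (A $$ (i, k1) * A $$ (j, k2) + A $$ (i, k2) * A $$ (j, k1)) *
             (bsym b01 b02 b12 k1 k2 $ l))" if "(i,j) \<in> pairs3" "v = bsym b01 b02 b12 i j" for i j v
          using compat[OF that(1)] rm[of v] bsc[of i j] that(2) l by auto
        have p01: "(0,1) \<in> pairs3" and p02: "(0,2) \<in> pairs3" and p12: "(1,2) \<in> pairs3"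
          by (simp_all add: pairs3_eq)
        note C01 = C[OF p01 bsym_vals(1)[symmetric]] and C02 = C[OF p02 bsym_vals(3)[symmetric]]
          and C12 = C[OF p12 bsym_vals(5)[symmetric]]
        have "(\<Sum>m<s-3. betaf b01 b02 b12 (($) a) (($) b) m * L$$(m+3,k)) =
           (\<Sum>m<d. betaf b01 b02 b12 (($) a) (($) b) m * D$$(m,l))"
          using Lidx kl sd l by (auto simp: d_def[symmetric] intro!: sum.cong)
        also have "\<dots> = (a $ 0 * b $ 1 + a $ 1 * b $ 0) * (\<Sum>m<d. b01 $ m * D $$ (m, l))
             + (a $ 0 * b $ 2 + a $ 2 * b $ 0) * (\<Sum>m<d. b02 $ m * D $$ (m, l))
             + (a $ 1 * b $ 2 + a $ 2 * b $ 1) * (\<Sum>m<d. b12 $ m * D $$ (m, l))"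
          unfolding betaf_expand by (simp add: distrib_right sum.distrib sum_distrib_left mult.assoc)
        also have "\<dots> = betaf b01 b02 b12 (\<lambda>p. \<Sum>i<3. a $ i * A $$ (i, p)) (\<lambda>p. \<Sum>i<3. b $ i * A $$ (i, p)) l"
          unfolding C01 C02 C12 by (rule key[of "($) a" "($) b" "\<lambda>i j. A $$ (i, j)"])
        finally show ?thesis using False R l_def by simp
      qed
    qed
    show "in_H_circ s (circ_op s b01 b02 b12) L"
      unfolding in_H_circ_def using L bij hom by blast
  qed
qed

end
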